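(* Let $c\ge2$ and let $Y\subseteq\Sigma^c$ be a zero-set with $|Y|=4$. Then $Y$ survives one round of tornado tabulation with probability $\left(3-2/|\Sigma|\right)/|\Sigma|$.
   Context: Let $\Sigma=\{0,\dots,2^k-1\}$, identified with $k$-bit strings, $\oplus$ bitwise xor. A simple tabulation hash function $g:\Sigma^b\to\Sigma$ is $g(x_1\cdots x_b)=T_1[x_1]\oplus\cdots\oplus T_b[x_b]$ with independent fully random tables $T_i:\Sigma\to\Sigma$. Let $\tilde h_1,\tilde h_2,\dots$ be mutually independent simple tabulation functions with $\tilde h_i:\Sigma^{c+i-1}\to\Sigma$. The simple derived key (with $d$ rounds) of $x=x_1\cdots x_c$ is $\tilde h'(x)=\tilde x_1\cdots\tilde x_{c+d}$ with $\tilde x_i=x_i$ for $i\le c$ and $\tilde x_i=\tilde h_{i-c}(\tilde x_1\cdots\tilde x_{i-1})$ for $c<i\le c+d$. A set $Y$ of keys in $\Sigma^b$ is a zero-set if for every position $i$ and every character $a$, the number of $y\in Y$ with $y_i=a$ is even. A zero-set $Y\subseteq\Sigma^c$ survives $d$ rounds of tornado tabulation if $\tilde h'(Y)\subseteq\Sigma^{c+d}$ is a zero-set; "one round" means $d=1$. *)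

theory Defs
  imports "HOL-Probability.Probability"
begin

definition Sigma :: "nat \<Rightarrow> nat set" where
  "Sigma k = {0..<2^k}"

definition keys :: "nat \<Rightarrow> nat \<Rightarrow> nat list set" where
  "keys k b = {x. length x = b \<and> set x \<subseteq> Sigma k}"

definition zero_set :: "nat \<Rightarrow> nat list set \<Rightarrow> bool" where
  "zero_set b Y \<longleftrightarrow> (\<forall>i<b. \<forall>a. even (card {y\<in>Y. y ! i = a}))"

definition simple_tab :: "(nat \<Rightarrow> nat \<Rightarrow> nat) \<Rightarrow> nat list \<Rightarrow> nat" where
  "simple_tab T x = foldr (\<lambda>i acc. xor (T i (x ! i)) acc) [0..<length x] 0"

definition tables :: "nat \<Rightarrow> nat \<Rightarrow> (nat \<Rightarrow> nat \<Rightarrow> nat) set" where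
  "tables k b = PiE {0..<b} (\<lambda>_. PiE (Sigma k) (\<lambda>_. Sigma k))"

definition derived_key1 :: "(nat \<Rightarrow> nat \<Rightarrow> nat) \<Rightarrow> nat list \<Rightarrow> nat list" where
  "derived_key1 T x = x @ [simple_tab T x]"

definition survives1 :: "nat \<Rightarrow> (nat \<Rightarrow> nat \<Rightarrow> nat) \<Rightarrow> nat list set \<Rightarrow> bool" where
  "survives1 c T Y \<longleftrightarrow> zero_set (c + 1) (derived_key1 T ` Y)"

end

theory Submission imports Defs begin
unbundle bit_operations_syntax

lemma xor_cancel_nat [simp]: "(a::nat) XOR (a XOR b) = b"
  by (simp add: xor.assoc[symmetric])

lemma xor_cancel2_nat [simp]: "((b::nat) XOR a) XOR a = b"
  by (simp add: xor.assoc)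

lemma xor_eq0_iff_nat: "((a::nat) XOR b = 0) = (a = b)"
  by (metis xor_cancel_nat xor.right_neutral xor_self_eq)

lemma xor_id_iff_nat: "((u::nat) XOR a = a) = (u = 0)"
  by (metis xor_cancel2_nat xor_self_eq xor.left_neutral)

lemma xor_lt: "(a::nat) < 2^k \<Longrightarrow> b < 2^k \<Longrightarrow> a XOR b < 2^k"
  by (metis take_bit_nat_eq_self_iff take_bit_xor)

lemma foldr_lt: "(\<And>i. i \<in> set ls \<Longrightarrow> T i (v!i) < (2::nat)^k) \<Longrightarrow>
  foldr (\<lambda>i acc. T i (v ! i) XOR acc) ls 0 < 2^k"
  by (induction ls) (auto intro: xor_lt)

definition upd :: "(nat \<Rightarrow> nat \<Rightarrow> nat) \<Rightarrow> nat \<Rightarrow> nat \<Rightarrow> nat \<Rightarrow> nat \<Rightarrow> nat \<Rightarrow> nat" where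
  "upd T p e a = T(p := (T p)(e := T p e XOR a))"

lemma foldr_upd: "distinct ls \<Longrightarrow>
  foldr (\<lambda>i acc. upd T p e a i (v!i) XOR acc) ls 0 =
  foldr (\<lambda>i acc. T i (v!i) XOR acc) ls 0 XOR (if p \<in> set ls \<and> v!p = e then a else 0)"
  by (induction ls) (auto simp: upd_def xor.assoc xor.commute xor.left_commute)

lemma simple_tab_upd: "simple_tab (upd T p e a) v =
  simple_tab T v XOR (if p < length v \<and> v!p = e then a else 0)"
  unfolding simple_tab_def by (subst foldr_upd) auto

lemma upd_upd[simp]: "upd (upd T p e a) p e a = T"
  by (auto simp: upd_def fun_eq_iff)

lemma upd_tables: "T \<in> tables k c \<Longrightarrow> p < c \<Longrightarrow> e \<in> Sigma k \<Longrightarrow> a \<in> Sigma k \<Longrightarrow>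
  upd T p e a \<in> tables k c"
  unfolding tables_def upd_def
  apply (auto simp: PiE_iff extensional_def Sigma_def intro!: xor_lt)
  done

lemma upd_bij: "p < c \<Longrightarrow> e \<in> Sigma k \<Longrightarrow> a \<in> Sigma k \<Longrightarrow>
  bij_betw (\<lambda>T. upd T p e a) (tables k c) (tables k c)"
  by (rule bij_betwI[where g = "\<lambda>T. upd T p e a"]) (auto simp: upd_tables)

lemma simple_tab_Sigma: "T \<in> tables k c \<Longrightarrow> v \<in> keys k c \<Longrightarrow> simple_tab T v \<in> Sigma k"
  unfolding simple_tab_def
proof -
  assume T: "T \<in> tables k c" and v: "v \<in> keys k c"
  have "T i (v!i) < 2^k" if "i < length v" for i
  proof -
    have "i < c" "v!i \<in> Sigma k" using v that nth_mem[OF that] by (auto simp: keys_def)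
    then have "T i (v!i) \<in> Sigma k" using T unfolding tables_def by (auto dest!: PiE_mem)
    then show ?thesis by (simp add: Sigma_def)
  qed
  then show "foldr (\<lambda>i acc. T i (v ! i) XOR acc) [0..<length v] 0 \<in> Sigma k"
    by (auto simp: Sigma_def intro!: foldr_lt)
qed

lemma foldr4: "(\<And>i. i \<in> set ls \<Longrightarrow> T i (w!i) XOR T i (x!i) XOR T i (y!i) XOR T i (z!i) = 0) \<Longrightarrow>
  foldr (\<lambda>i acc. T i (w!i) XOR acc) ls 0 XOR foldr (\<lambda>i acc. T i (x!i) XOR acc) ls 0 XOR
  foldr (\<lambda>i acc. T i (y!i) XOR acc) ls 0 XOR foldr (\<lambda>i acc. T i (z!i) XOR acc) ls 0 = (0::nat)"
proof (induction ls)
  case (Cons i ls)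
  have "T i (w!i) XOR T i (x!i) XOR T i (y!i) XOR T i (z!i) = 0" using Cons by auto
  moreover have "foldr (\<lambda>i acc. T i (w!i) XOR acc) ls 0 XOR foldr (\<lambda>i acc. T i (x!i) XOR acc) ls 0 XOR
  foldr (\<lambda>i acc. T i (y!i) XOR acc) ls 0 XOR foldr (\<lambda>i acc. T i (z!i) XOR acc) ls 0 = (0::nat)"
    using Cons by auto
  ultimately show ?case by (simp add: xor.assoc xor.commute xor.left_commute)
qed simp

lemma card4: "w \<noteq> x \<Longrightarrow> w \<noteq> y \<Longrightarrow> w \<noteq> z \<Longrightarrow> x \<noteq> y \<Longrightarrow> x \<noteq> z \<Longrightarrow> y \<noteq> z \<Longrightarrow>
  card {v\<in>{w,x,y,z}. f v = a} = of_bool (f w = a) + of_bool (f x = a) + of_bool (f y = a) + of_bool (f z = a)"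
proof -
  have e: "{v\<in>insert b B. f v = a} = (if f b = a then insert b {v\<in>B. f v = a} else {v\<in>B. f v = a})" for b B
    by auto
  assume "w \<noteq> x" "w \<noteq> y" "w \<noteq> z" "x \<noteq> y" "x \<noteq> z" "y \<noteq> z"
  then show ?thesis unfolding e by (simp add: card_insert_if)
qed

lemma pair4: assumes "w \<noteq> x" "w \<noteq> y" "w \<noteq> z" "x \<noteq> y" "x \<noteq> z" "y \<noteq> z"
  shows "(\<forall>a. even (card {v\<in>{w,x,y,z}. f v = a})) \<longleftrightarrow>
    ((f w = f x \<and> f y = f z) \<or> (f w = f y \<and> f x = f z) \<or> (f w = f z \<and> f x = f y))"
proof
  assume H: "\<forall>a. even (card {v\<in>{w,x,y,z}. f v = a})"
  have "even (of_bool (f w = a) + of_bool (f x = a) + of_bool (f y = a) + of_bool (f z = a) :: nat)" for a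
    using H card4[OF assms, of f a] by metis
  from this[of "f w"] this[of "f x"] this[of "f y"]
  show "((f w = f x \<and> f y = f z) \<or> (f w = f y \<and> f x = f z) \<or> (f w = f z \<and> f x = f y))"
    by (auto split: if_splits)
next
  assume "((f w = f x \<and> f y = f z) \<or> (f w = f y \<and> f x = f z) \<or> (f w = f z \<and> f x = f y))"
  then show "\<forall>a. even (card {v\<in>{w,x,y,z}. f v = a})"
    unfolding card4[OF assms]
    by (intro allI, elim disjE conjE; cases "f w = a"; cases "f y = a"; cases "f x = a"; cases "f z = a"; simp)
qed


lemma sum0_iff:
  assumes "(a::nat) XOR b XOR c XOR d = 0"
  shows "((a = b \<and> c = d) \<or> (a = c \<and> b = d) \<or> (a = d \<and> b = c)) \<longleftrightarrow> (a = b \<or> a = c \<or> b = c)"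
proof -
  have "(a XOR b XOR c) XOR d = 0" using assms by (simp add: xor.assoc)
  then have d: "d = a XOR b XOR c" by (simp add: xor_eq0_iff_nat)
  show ?thesis unfolding d
    by (auto simp: xor.assoc[symmetric]) (simp_all add: xor.assoc xor.commute xor.left_commute)
qed

lemma solve_lin:
  fixes a b :: nat
  assumes "dx1 \<or> dy1" "dx2 \<or> dy2" "dx1 \<noteq> dx2 \<or> dy1 \<noteq> dy2"
  defines "P \<equiv> \<lambda>e1 e2. (if dx2 then e2 else 0) XOR (if dx1 then e1 else 0) = a \<and>
                       (if dy2 then e2 else 0) XOR (if dy1 then e1 else 0) = b"
  shows "P a b \<or> P b a \<or> P (a XOR b) b \<or> P b (a XOR b) \<or> P (a XOR b) a \<or> P a (a XOR b)"
  using assms(1-3) unfolding P_def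
  by (cases dx1; cases dy1; cases dx2; cases dy2; simp add: xor.assoc xor.commute xor.left_commute)

lemma solve_ex:
  fixes a b :: nat
  assumes "dx1 \<or> dy1" "dx2 \<or> dy2" "dx1 \<noteq> dx2 \<or> dy1 \<noteq> dy2" "a \<in> S" "b \<in> S" "a XOR b \<in> S"
  shows "\<exists>e1\<in>S. \<exists>e2\<in>S. (if dx2 then e2 else 0) XOR (if dx1 then e1 else 0) = a \<and>
                       (if dy2 then e2 else 0) XOR (if dy1 then e1 else 0) = b"
proof -
  define P where "P = (\<lambda>e1 e2. (if dx2 then e2 else 0) XOR (if dx1 then e1 else 0) = a \<and>
                       (if dy2 then e2 else 0) XOR (if dy1 then e1 else 0) = b)"
  have "P a b \<or> P b a \<or> P (a XOR b) b \<or> P b (a XOR b) \<or> P (a XOR b) a \<or> P a (a XOR b)"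
    using assms(1-3) unfolding P_def
    by (cases dx1; cases dy1; cases dx2; cases dy2; simp add: xor.assoc xor.commute xor.left_commute)
  then have "\<exists>e1\<in>S. \<exists>e2\<in>S. P e1 e2" using assms(4-6) by blast
  then show ?thesis unfolding P_def .
qed


lemma survives_iff:
  assumes Y: "Y = {w,x,y,z}" and dist: "w \<noteq> x" "w \<noteq> y" "w \<noteq> z" "x \<noteq> y" "x \<noteq> z" "y \<noteq> z"
    and sub: "Y \<subseteq> keys k c" and zs: "zero_set c Y"
  shows "survives1 c T Y \<longleftrightarrow> (simple_tab T w = simple_tab T x \<or> simple_tab T w = simple_tab T y \<or> simple_tab T x = simple_tab T y)"
proof -
  let ?f = "derived_key1 T"
  let ?h = "simple_tab T"
  have len: "length v = c" if "v \<in> Y" for v using sub that by (auto simp: keys_def)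
  have inj: "inj_on ?f Y" by (auto simp: inj_on_def derived_key1_def)
  have ce: "card {u\<in>?f ` Y. u!i = a} = card {v\<in>Y. ?f v ! i = a}" for i a
  proof -
    have "{u\<in>?f ` Y. u!i = a} = ?f ` {v\<in>Y. ?f v ! i = a}" by auto
    then show ?thesis using card_image[OF inj_on_subset[OF inj]] by auto
  qed
  have lt: "{v\<in>Y. ?f v ! i = a} = {v\<in>Y. v ! i = a}" if "i < c" for i a
    using len that by (auto simp: derived_key1_def nth_append)
  have eq: "{v\<in>Y. ?f v ! c = a} = {v\<in>Y. ?h v = a}" for a
    using len by (auto simp: derived_key1_def nth_append)
  have "survives1 c T Y \<longleftrightarrow> (\<forall>i<c+1. \<forall>a. even (card {v\<in>Y. ?f v ! i = a}))"
    unfolding survives1_def zero_set_def ce ..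
  also have "\<dots> \<longleftrightarrow> (\<forall>i<c. \<forall>a. even (card {v\<in>Y. v ! i = a})) \<and> (\<forall>a. even (card {v\<in>Y. ?h v = a}))"
    using lt eq by (auto simp: less_Suc_eq)
  also have "\<dots> \<longleftrightarrow> (\<forall>a. even (card {v\<in>Y. ?h v = a}))"
    using zs unfolding zero_set_def by auto
  also have "\<dots> \<longleftrightarrow> ((?h w = ?h x \<and> ?h y = ?h z) \<or> (?h w = ?h y \<and> ?h x = ?h z) \<or> (?h w = ?h z \<and> ?h x = ?h y))"
    unfolding Y by (rule pair4[OF dist])
  also have "\<dots> \<longleftrightarrow> (?h w = ?h x \<or> ?h w = ?h y \<or> ?h x = ?h y)"
  proof (rule sum0_iff)
    have pi: "T i (w!i) XOR T i (x!i) XOR T i (y!i) XOR T i (z!i) = 0" if "i < c" for i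
    proof -
      have "\<forall>a. even (card {v\<in>{w,x,y,z}. v ! i = a})" using zs that Y unfolding zero_set_def by auto
      then have "(w!i = x!i \<and> y!i = z!i) \<or> (w!i = y!i \<and> x!i = z!i) \<or> (w!i = z!i \<and> x!i = y!i)"
        using pair4[OF dist, of "\<lambda>v. v!i"] by auto
      then show ?thesis by (elim disjE conjE) (simp_all add: xor.assoc xor.commute xor.left_commute)
    qed
    have "w \<in> Y" "x \<in> Y" "y \<in> Y" "z \<in> Y" using Y by auto
    then have "length w = c" "length x = c" "length y = c" "length z = c" using len by auto
    then show "?h w XOR ?h x XOR ?h y XOR ?h z = 0"
      unfolding simple_tab_def by (simp only:) (rule foldr4, use pi in auto)
  qed
  finally show ?thesis .
qed


lemma types_exist:
  assumes Y: "Y = {w,x,y,z}" and dist: "w \<noteq> x" "w \<noteq> y" "w \<noteq> z" "x \<noteq> y" "x \<noteq> z" "y \<noteq> z"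
    and sub: "Y \<subseteq> keys k c" and zs: "zero_set c Y"
  shows "\<exists>i<c. \<exists>j<c. (x!i \<noteq> w!i \<or> y!i \<noteq> w!i) \<and> (x!j \<noteq> w!j \<or> y!j \<noteq> w!j) \<and>
          ((x!i \<noteq> w!i) \<noteq> (x!j \<noteq> w!j) \<or> (y!i \<noteq> w!i) \<noteq> (y!j \<noteq> w!j))"
proof (rule ccontr)
  assume N: "\<not> ?thesis"
  have "w \<in> Y" "x \<in> Y" "y \<in> Y" "z \<in> Y" using Y by auto
  then have L: "length w = c" "length x = c" "length y = c" "length z = c" using sub by (auto simp: keys_def)
  have pp: "(w!p = x!p \<and> y!p = z!p) \<or> (w!p = y!p \<and> x!p = z!p) \<or> (w!p = z!p \<and> x!p = y!p)" if "p < c" for p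
  proof -
    have "\<forall>a. even (card {v\<in>{w,x,y,z}. v ! p = a})" using zs that Y unfolding zero_set_def by auto
    then show ?thesis using pair4[OF dist, of "\<lambda>v. v!p"] by auto
  qed
  obtain i where i: "i < c" "x!i \<noteq> w!i"
    using dist(1) L by (metis nth_equalityI)
  show False
  proof (cases "y!i = w!i")
    case True
    have "y!p = w!p" if "p < c" for p
      using N i True that by blast
    then have "y = w" using L by (metis nth_equalityI)
    then show False using dist by auto
  next
    case False
    have "x!p = y!p" if "p < c" for p
    proof (cases "x!p = w!p \<and> y!p = w!p")
      case True then show ?thesis by simp
    next
      case F: False
      then have "x!p \<noteq> w!p" "y!p \<noteq> w!p" using N i False that by blast+
      then show ?thesis using pp[OF that] by auto
    qed
    then have "x = y" using L by (metis nth_equalityI)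
    then show False using dist by auto
  qed
qed


lemma card_G: "card {q \<in> Sigma k \<times> Sigma k. fst q = 0 \<or> snd q = 0 \<or> fst q = snd q} = 3 * card (Sigma k) - 2"
proof -
  let ?S = "Sigma k"
  have fin: "finite ?S" and z: "0 \<in> ?S" by (auto simp: Sigma_def)
  have "{q \<in> ?S \<times> ?S. fst q = 0 \<or> snd q = 0 \<or> fst q = snd q} = (SIGMA a:?S. {b\<in>?S. a = 0 \<or> b = 0 \<or> a = b})"
    by auto
  then have "card {q \<in> ?S \<times> ?S. fst q = 0 \<or> snd q = 0 \<or> fst q = snd q} = (\<Sum>a\<in>?S. card {b\<in>?S. a = 0 \<or> b = 0 \<or> a = b})"
    using fin by (simp add: card_SigmaI)
  also have "\<dots> = card {b\<in>?S. True} + (\<Sum>a\<in>?S-{0}. card {b\<in>?S. a = 0 \<or> b = 0 \<or> a = b})"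
    using fin z by (simp add: sum.remove)
  also have "\<dots> = card ?S + (\<Sum>a\<in>?S-{0}. 2)"
  proof -
    have "card {b\<in>?S. a = 0 \<or> b = 0 \<or> a = b} = 2" if "a \<in> ?S - {0}" for a
    proof -
      have "{b\<in>?S. a = 0 \<or> b = 0 \<or> a = b} = {0, a}" using that z by auto
      then show ?thesis using that by auto
    qed
    then show ?thesis by simp
  qed
  also have "\<dots> = card ?S + 2 * (card ?S - 1)" using fin z by simp
  also have "\<dots> = 3 * card ?S - 2" using fin z card_gt_0_iff[of ?S] by auto
  finally show ?thesis .
qed


theorem lemma8p1:
  fixes k c :: nat and Y :: "nat list set"
  assumes "c \<ge> 2"
    and "Y \<subseteq> keys k c"
    and "zero_set c Y"
    and "card Y = 4"
  shows "measure_pmf.prob (pmf_of_set (tables k c)) {T. survives1 c T Y}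
         = (3 - 2 / real (card (Sigma k))) / real (card (Sigma k))"
proof -
  let ?S = "Sigma k"
  let ?TT = "tables k c"
  have "\<exists>w x y z. Y = {w,x,y,z} \<and> w \<noteq> x \<and> w \<noteq> y \<and> w \<noteq> z \<and> x \<noteq> y \<and> x \<noteq> z \<and> y \<noteq> z"
    using assms(4) by (simp add: card_Suc_eq numeral_eq_Suc) blast
  then obtain w x y z where Y: "Y = {w,x,y,z}" and dist: "w \<noteq> x" "w \<noteq> y" "w \<noteq> z" "x \<noteq> y" "x \<noteq> z" "y \<noteq> z"
    by blast
  have kw: "w \<in> keys k c" "x \<in> keys k c" "y \<in> keys k c" using assms(2) Y by auto
  then have L: "length w = c" "length x = c" "length y = c" by (auto simp: keys_def)
  have SX: "a \<in> ?S \<Longrightarrow> b \<in> ?S \<Longrightarrow> a XOR b \<in> ?S" for a b by (auto simp: Sigma_def intro: xor_lt)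
  have z: "0 \<in> ?S" and finS: "finite ?S" by (auto simp: Sigma_def)
  define D where "D T = (simple_tab T w XOR simple_tab T x, simple_tab T w XOR simple_tab T y)" for T
  have Dtab: "D T \<in> ?S \<times> ?S" if "T \<in> ?TT" for T
    using simple_tab_Sigma[OF that] kw SX unfolding D_def by auto
  have eff: "D (upd T p (w!p) e) = (fst (D T) XOR (if x!p \<noteq> w!p then e else 0), snd (D T) XOR (if y!p \<noteq> w!p then e else 0))"
    if "p < c" for T p e
    using that L unfolding D_def simple_tab_upd by (auto simp: xor.assoc xor.commute xor.left_commute)
  obtain i j where ij: "i < c" "j < c" "x!i \<noteq> w!i \<or> y!i \<noteq> w!i" "x!j \<noteq> w!j \<or> y!j \<noteq> w!j"
    "(x!i \<noteq> w!i) \<noteq> (x!j \<noteq> w!j) \<or> (y!i \<noteq> w!i) \<noteq> (y!j \<noteq> w!j)"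
    using types_exist[OF Y dist assms(2,3)] by blast
  have wS: "w!i \<in> ?S" "w!j \<in> ?S" using kw(1) L ij(1,2) nth_mem by (auto simp: keys_def)
  have shift: "\<exists>\<phi>. bij_betw \<phi> ?TT ?TT \<and> (\<forall>T. D (\<phi> T) = (fst (D T) XOR a, snd (D T) XOR b))"
    if ab: "a \<in> ?S" "b \<in> ?S" for a b
  proof -
    let ?dx1 = "x!i \<noteq> w!i" and ?dy1 = "y!i \<noteq> w!i" and ?dx2 = "x!j \<noteq> w!j" and ?dy2 = "y!j \<noteq> w!j"
    obtain e1 e2 where e: "e1 \<in> ?S" "e2 \<in> ?S"
      "(if ?dx2 then e2 else 0) XOR (if ?dx1 then e1 else 0) = a"
      "(if ?dy2 then e2 else 0) XOR (if ?dy1 then e1 else 0) = b"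
      using solve_ex[OF ij(3,4,5) ab SX[OF ab]] by blast
    let ?phi = "\<lambda>T. upd (upd T j (w!j) e2) i (w!i) e1"
    have "bij_betw ?phi ?TT ?TT"
      using bij_betw_trans[OF upd_bij[OF ij(2) wS(2) e(2)] upd_bij[OF ij(1) wS(1) e(1)]]
      by (simp add: comp_def)
    moreover have "D (?phi T) = (fst (D T) XOR a, snd (D T) XOR b)" for T
      unfolding eff[OF ij(1)] eff[OF ij(2)] e(3,4)[symmetric] by (simp add: xor.assoc)
    ultimately show ?thesis by blast
  qed
  define fib where "fib q = {T\<in>?TT. D T = q}" for q
  have finT: "finite ?TT" unfolding tables_def using finS by (intro finite_PiE) auto
  have neT: "?TT \<noteq> {}" unfolding tables_def using z by (auto simp: PiE_eq_empty_iff)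
  have fibcard: "card (fib q) = card (fib (0,0))" if q: "q \<in> ?S \<times> ?S" for q
  proof -
    obtain a b where qab: "q = (a,b)" "a \<in> ?S" "b \<in> ?S" using q by auto
    obtain \<phi> where phi: "bij_betw \<phi> ?TT ?TT" "\<And>T. D (\<phi> T) = (fst (D T) XOR a, snd (D T) XOR b)"
      using shift[OF qab(2,3)] by blast
    have "bij_betw \<phi> (fib (0,0)) (fib q)"
    proof (rule bij_betw_imageI)
      show "inj_on \<phi> (fib (0,0))" using phi(1) unfolding bij_betw_def fib_def
        by (auto intro: inj_on_subset)
      show "\<phi> ` fib (0,0) = fib q"
      proof
        show "\<phi> ` fib (0,0) \<subseteq> fib q" using phi bij_betwE[OF phi(1)] qab unfolding fib_def by auto
        show "fib q \<subseteq> \<phi> ` fib (0,0)"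
        proof
          fix T assume T: "T \<in> fib q"
          then have "T \<in> \<phi> ` ?TT" using phi(1) unfolding fib_def bij_betw_def by auto
          then obtain T0 where T0: "T0 \<in> ?TT" "T = \<phi> T0" by auto
          have "D T0 = (0,0)" using T T0 phi(2)[of T0] qab unfolding fib_def
            by (cases "D T0") (auto simp: xor_id_iff_nat)
          then show "T \<in> \<phi> ` fib (0,0)" using T0 unfolding fib_def by auto
        qed
      qed
    qed
    then show ?thesis by (rule bij_betw_same_card[symmetric])
  qed
  have finfib: "finite (fib q)" for q using finT unfolding fib_def by auto
  have disj: "\<forall>q\<in>A. \<forall>q'\<in>A. q \<noteq> q' \<longrightarrow> fib q \<inter> fib q' = {}" for A unfolding fib_def by auto
  have cardU: "card (\<Union>q\<in>A. fib q) = card A * card (fib (0,0))" if "A \<subseteq> ?S \<times> ?S" for A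
  proof -
    have fA: "finite A" using that finS finite_subset by blast
    have "card (\<Union>q\<in>A. fib q) = (\<Sum>q\<in>A. card (fib q))"
      using fA finfib disj by (intro card_UN_disjoint) auto
    also have "\<dots> = (\<Sum>q\<in>A. card (fib (0,0)))" using that fibcard by (intro sum.cong) auto
    finally show ?thesis by simp
  qed
  have T_eq: "?TT = (\<Union>q\<in>?S \<times> ?S. fib q)" using Dtab unfolding fib_def by auto
  define G where "G = {q \<in> ?S \<times> ?S. fst q = 0 \<or> snd q = 0 \<or> fst q = snd q}"
  have E_eq: "?TT \<inter> {T. survives1 c T Y} = (\<Union>q\<in>G. fib q)"
  proof -
    have "survives1 c T Y \<longleftrightarrow> (fst (D T) = 0 \<or> snd (D T) = 0 \<or> fst (D T) = snd (D T))" for T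
      unfolding survives_iff[OF Y dist assms(2,3)] D_def
      by (auto simp: xor_eq0_iff_nat) (metis xor_cancel_nat)
    then show ?thesis using Dtab unfolding G_def fib_def by auto
  qed
  have cT: "card ?TT = card (?S \<times> ?S) * card (fib (0,0))"
    using cardU[of "?S \<times> ?S"] T_eq by simp
  have cE: "card (?TT \<inter> {T. survives1 c T Y}) = (3 * card ?S - 2) * card (fib (0,0))"
    unfolding E_eq using cardU[of G] card_G[of k] unfolding G_def by auto
  have n1: "card ?S \<ge> 1" using finS z card_gt_0_iff[of ?S] by auto
  have F0: "card (fib (0,0)) > 0" using cT neT finT by (metis card_gt_0_iff mult_is_0 neq0_conv)
  have r: "real (3 * card ?S - 2) = 3 * real (card ?S) - 2" using n1 by (simp add: of_nat_diff)
  show ?thesis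
    unfolding measure_pmf_of_set[OF neT finT] cE cT card_cartesian_product
    using n1 F0 by (simp add: r field_simps)
qed

end
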